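(* Let $X$ be a random variable in a sublinear expectation space and let $\{X^\alpha:\alpha\in\mathcal A\}$ be a family of random variables on a classical probability space $(\Omega',\mathcal F,P)$. Suppose that $$\hat{\mathbb E}[\varphi(X)]=\sup_{\alpha\in\mathcal A}E_P[\varphi(X^\alpha)]\quad\text{for all }\varphi\in C_{l.Lip}(\mathbb R).$$ Then for every continuity point $y$ of the upper cdf $\overline F_X$, $$\overline F_X(y)=\sup_{\alpha\in\mathcal A}P(X^\alpha\le y),$$ and for every continuity point $y$ of the lower cdf $\underline F_X$, $$\underline F_X(y)=\inf_{\alpha\in\mathcal A}P(X^\alpha\le y).$$
   Context: Sublinear expectation $\hat{\mathbb E}[Z]=\sup_{Q\in\mathcal P}E_Q[Z]$ for a family $\mathcal P$ of probability measures on $(\Omega,\mathcal F_0)$, defined in particular on indicators: upper probability $\mathbb V(A)=\hat{\mathbb E}[\mathbf 1_A]=\sup_{Q\in\mathcal P}Q(A)$. Upper cdf $\overline F_X(y)=\hat{\mathbb E}[\mathbf 1_{\{X\le y\}}]$; lower cdf $\underline F_X(y)=-\hat{\mathbb E}[-\mathbf 1_{\{X\le y\}}]$. $C_{l.Lip}(\mathbb R)$: functions with $|\varphi(x)-\varphi(y)|\le C_\varphi(1+|x|^k+|y|^k)|x-y|$ for some $k\in\mathbb N$, $C_\varphi>0$. *)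

theory Defs
  imports "HOL-Probability.Probability"
begin

text \<open>Sublinear expectation generated by a family of probability measures:
  E^[Z] = sup over Q in Ps of E_Q[Z].\<close>
definition sub_exp :: "'a measure set \<Rightarrow> ('a \<Rightarrow> real) \<Rightarrow> real" where
  "sub_exp Ps Z = (SUP Q\<in>Ps. integral\<^sup>L Q Z)"

definition upper_cdf :: "'a measure set \<Rightarrow> ('a \<Rightarrow> real) \<Rightarrow> real \<Rightarrow> real" where
  "upper_cdf Ps X y = sub_exp Ps (indicator {w. X w \<le> y})"

definition lower_cdf :: "'a measure set \<Rightarrow> ('a \<Rightarrow> real) \<Rightarrow> real \<Rightarrow> real" where
  "lower_cdf Ps X y = - sub_exp Ps (\<lambda>w. - indicator {w. X w \<le> y} w)"

definition C_lLip :: "(real \<Rightarrow> real) set" where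
  "C_lLip = {\<phi>. \<exists>C>0. \<exists>k::nat. \<forall>x y.
      \<bar>\<phi> x - \<phi> y\<bar> \<le> C * (1 + \<bar>x\<bar> ^ k + \<bar>y\<bar> ^ k) * \<bar>x - y\<bar>}"

end

theory Submission
  imports Defs
begin

definition ramp :: "real \<Rightarrow> real \<Rightarrow> real \<Rightarrow> real" where
  "ramp c d x = max 0 (min 1 ((d - x) / (d - c)))"

lemma clamp_lip: "\<bar>max 0 (min 1 u) - max 0 (min 1 v)\<bar> \<le> \<bar>u - (v::real)\<bar>"
  by (simp add: max_def min_def abs_if)

lemma ramp_lLip: assumes "c < d" shows "ramp c d \<in> C_lLip" "(\<lambda>x. - ramp c d x) \<in> C_lLip"
proof -
  have *: "\<bar>ramp c d x - ramp c d y\<bar> \<le> (1/(d-c)) * (1 + \<bar>x\<bar>^0 + \<bar>y\<bar>^0) * \<bar>x - y\<bar>" for x y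
  proof -
    have "\<bar>ramp c d x - ramp c d y\<bar> \<le> \<bar>(d - x) / (d - c) - (d - y) / (d - c)\<bar>"
      unfolding ramp_def by (rule clamp_lip)
    also have "\<dots> = \<bar>x - y\<bar> / (d - c)" using assms
      by (simp add: diff_divide_distrib[symmetric] abs_minus_commute)
    also have "\<dots> \<le> (1/(d-c)) * 3 * \<bar>x - y\<bar>" using assms by (simp add: field_simps mult_right_mono)
    finally show ?thesis by simp
  qed
  have pos: "1/(d-c) > 0" using assms by simp
  show "ramp c d \<in> C_lLip" unfolding C_lLip_def using * pos by blast
  show "(\<lambda>x. - ramp c d x) \<in> C_lLip" unfolding C_lLip_def using * pos
    by (intro CollectI exI[of _ "1/(d-c)"] conjI exI[of _ 0]) (auto simp: abs_minus_commute)
qed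

lemma ramp_bounds: assumes "c < d"
  shows "x \<le> c \<Longrightarrow> ramp c d x = 1" "d \<le> x \<Longrightarrow> ramp c d x = 0"
    "0 \<le> ramp c d x" "ramp c d x \<le> 1"
  using assms by (auto simp: ramp_def indicator_def field_simps)

lemma int_le_const: "prob_space Q \<Longrightarrow> integrable Q g \<Longrightarrow> (\<And>x. g x \<le> (B::real)) \<Longrightarrow> integral\<^sup>L Q g \<le> B"
proof -
  assume a: "prob_space Q" "integrable Q g" "\<And>x. g x \<le> B"
  have b: "integrable Q (\<lambda>_. B)" using \<open>prob_space Q\<close> by (simp add: prob_space.finite_measure finite_measure.integrable_const)
  have "integral\<^sup>L Q g \<le> integral\<^sup>L Q (\<lambda>_. B)"
    by (rule integral_mono[OF a(2) b]) (use a in auto)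
  then show ?thesis using \<open>prob_space Q\<close> by (simp add: prob_space.prob_space)
qed

lemma int_ge_const: "prob_space Q \<Longrightarrow> integrable Q g \<Longrightarrow> (\<And>x. (B::real) \<le> g x) \<Longrightarrow> B \<le> integral\<^sup>L Q g"
proof -
  assume a: "prob_space Q" "integrable Q g" "\<And>x. B \<le> g x"
  have b: "integrable Q (\<lambda>_. B)" using \<open>prob_space Q\<close> by (simp add: prob_space.finite_measure finite_measure.integrable_const)
  have "integral\<^sup>L Q (\<lambda>_. B) \<le> integral\<^sup>L Q g"
    by (rule integral_mono[OF b a(2)]) (use a in auto)
  then show ?thesis using \<open>prob_space Q\<close> by (simp add: prob_space.prob_space)
qed

lemma sub_mono:
  assumes "Ps \<noteq> {}" "\<And>Q. Q \<in> Ps \<Longrightarrow> integrable Q f" "\<And>Q. Q \<in> Ps \<Longrightarrow> integrable Q g"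
    "\<And>x. f x \<le> g x" "bdd_above ((\<lambda>Q. integral\<^sup>L Q g) ` Ps)"
  shows "sub_exp Ps f \<le> sub_exp Ps g"
  unfolding sub_exp_def
  by (rule cSUP_mono[OF assms(1,5)]) (use assms in \<open>blast intro: integral_mono\<close>)

theorem mainTheorem11:
  fixes Ps :: "'a measure set" and M0 :: "'a measure" and X :: "'a \<Rightarrow> real"
    and P :: "'b measure" and A :: "'i set" and Xa :: "'i \<Rightarrow> 'b \<Rightarrow> real"
  assumes Ps_ne: "Ps \<noteq> {}"
    and Ps_prob: "\<And>Q. Q \<in> Ps \<Longrightarrow> prob_space Q"
    and Ps_sets: "\<And>Q. Q \<in> Ps \<Longrightarrow> sets Q = sets M0"
    and X_meas: "X \<in> borel_measurable M0"
    and X_int: "\<And>\<phi> Q. \<phi> \<in> C_lLip \<Longrightarrow> Q \<in> Ps \<Longrightarrow> integrable Q (\<lambda>w. \<phi> (X w))"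
    and X_bdd: "\<And>\<phi>. \<phi> \<in> C_lLip \<Longrightarrow> bdd_above ((\<lambda>Q. LINT w|Q. \<bar>\<phi> (X w)\<bar>) ` Ps)"
    and P_prob: "prob_space P"
    and A_ne: "A \<noteq> {}"
    and Xa_meas: "\<And>a. a \<in> A \<Longrightarrow> Xa a \<in> borel_measurable P"
    and Xa_int: "\<And>\<phi> a. \<phi> \<in> C_lLip \<Longrightarrow> a \<in> A \<Longrightarrow> integrable P (\<lambda>w. \<phi> (Xa a w))"
    and Xa_bdd: "\<And>\<phi>. \<phi> \<in> C_lLip \<Longrightarrow> bdd_above ((\<lambda>a. LINT w|P. \<phi> (Xa a w)) ` A)"
    and rep: "\<And>\<phi>. \<phi> \<in> C_lLip \<Longrightarrow>
                sub_exp Ps (\<lambda>w. \<phi> (X w)) = (SUP a\<in>A. LINT w|P. \<phi> (Xa a w))"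
  shows "(\<forall>y. isCont (upper_cdf Ps X) y \<longrightarrow>
           upper_cdf Ps X y = (SUP a\<in>A. measure P {w \<in> space P. Xa a w \<le> y})) \<and>
         (\<forall>y. isCont (lower_cdf Ps X) y \<longrightarrow>
           lower_cdf Ps X y = (INF a\<in>A. measure P {w \<in> space P. Xa a w \<le> y}))"
proof -
  have XQ[measurable]: "X \<in> borel_measurable Q" if "Q \<in> Ps" for Q
    unfolding measurable_cong_sets[OF Ps_sets[OF that] refl, of borel] by (rule X_meas)
  have indQ: "integrable Q (\<lambda>w. indicator {w. X w \<le> d} w :: real)" if "Q \<in> Ps" for Q d
  proof -
    have [measurable]: "X \<in> borel_measurable Q" using XQ[OF that] .
    show ?thesis
      by (rule finite_measure.integrable_const_bound[where B=1])
        (auto simp: prob_space.finite_measure[OF Ps_prob[OF that]] indicator_def)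
  qed
  have nindQ: "integrable Q (\<lambda>w. - indicator {w. X w \<le> d} w :: real)" if "Q \<in> Ps" for Q d
    using indQ[OF that] by simp
  have rampQ: "integrable Q (\<lambda>w. ramp c d (X w))" "integrable Q (\<lambda>w. - ramp c d (X w))"
    if "Q \<in> Ps" "c < d" for Q c d
    using X_int[OF ramp_lLip(1)[OF that(2)] that(1)] X_int[OF ramp_lLip(2)[OF that(2)] that(1)] by simp_all
  have bdd_indQ: "bdd_above ((\<lambda>Q. integral\<^sup>L Q (\<lambda>w. indicator {w. X w \<le> d} w :: real)) ` Ps)" for d
    by (rule bdd_aboveI2[where M=1], rule int_le_const[OF Ps_prob indQ]) (auto simp: indicator_def)
  have bdd_nindQ: "bdd_above ((\<lambda>Q. integral\<^sup>L Q (\<lambda>w. - indicator {w. X w \<le> d} w :: real)) ` Ps)" for d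
    by (rule bdd_aboveI2[where M=0], rule int_le_const[OF Ps_prob nindQ]) (auto simp: indicator_def)
  have bdd_nrampQ: "bdd_above ((\<lambda>Q. integral\<^sup>L Q (\<lambda>w. - ramp c d (X w))) ` Ps)" if "c < d" for c d
    by (rule bdd_aboveI2[where M=0], rule int_le_const[OF Ps_prob rampQ(2)])
      (auto simp: that ramp_bounds(3)[OF that])
  define m where "m a y = measure P {w \<in> space P. Xa a w \<le> y}" for a y
  have m_eq: "m a y = integral\<^sup>L P (indicator {w \<in> space P. Xa a w \<le> y})" for a y
  proof -
    have "{w \<in> space P. Xa a w \<le> y} \<inter> space P = {w \<in> space P. Xa a w \<le> y}" by auto
    then show ?thesis unfolding m_def by simp
  qed
  have m01: "0 \<le> m a y" "m a y \<le> 1" for a y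
    unfolding m_def using P_prob by (auto simp: prob_space.prob_le_1)
  have indP: "integrable P (indicator {w \<in> space P. Xa a w \<le> y} :: 'b \<Rightarrow> real)" if "a \<in> A" for a y
  proof -
    have [measurable]: "Xa a \<in> borel_measurable P" using Xa_meas[OF that] .
    show ?thesis
      by (rule finite_measure.integrable_const_bound[where B=1])
        (auto simp: prob_space.finite_measure[OF P_prob] indicator_def)
  qed
  have rampP: "integrable P (\<lambda>w. ramp c d (Xa a w))" if "a \<in> A" "c < d" for a c d
    using Xa_int[OF ramp_lLip(1)[OF that(2)] that(1)] by simp
  have m_le_ramp: "m a c \<le> LINT w|P. ramp c d (Xa a w)" if "a \<in> A" "c < d" for a c d
    unfolding m_eq using that
    by (intro integral_mono indP rampP) (auto simp: indicator_def ramp_bounds)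
  have ramp_le_m: "(LINT w|P. ramp c d (Xa a w)) \<le> m a d" if "a \<in> A" "c < d" for a c d
    unfolding m_eq using that
    by (intro integral_mono indP rampP) (auto simp: indicator_def ramp_bounds)
  have repR: "sub_exp Ps (\<lambda>w. ramp c d (X w)) = (SUP a\<in>A. LINT w|P. ramp c d (Xa a w))" if "c < d" for c d
    using rep[OF ramp_lLip(1)[OF that]] by simp
  have repN: "sub_exp Ps (\<lambda>w. - ramp c d (X w)) = (SUP a\<in>A. LINT w|P. - ramp c d (Xa a w))" if "c < d" for c d
    using rep[OF ramp_lLip(2)[OF that]] by simp
  have bddR: "bdd_above ((\<lambda>a. LINT w|P. ramp c d (Xa a w)) ` A)" if "c < d" for c d
    using Xa_bdd[OF ramp_lLip(1)[OF that]] by simp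
  have bddN: "bdd_above ((\<lambda>a. LINT w|P. - ramp c d (Xa a w)) ` A)" if "c < d" for c d
    using Xa_bdd[OF ramp_lLip(2)[OF that]] by simp
  define U where "U = upper_cdf Ps X"
  define L where "L = lower_cdf Ps X"
  define S where "S y = (SUP a\<in>A. m a y)" for y
  define I where "I y = (INF a\<in>A. m a y)" for y
  have bddS: "bdd_above ((\<lambda>a. m a y) ` A)" for y using m01 by (intro bdd_aboveI2[where M=1]) auto
  have bddI: "bdd_below ((\<lambda>a. m a y) ` A)" for y using m01 by (intro bdd_belowI2[where m=0]) auto
  have SU: "S c \<le> U d" if "c < d" for c d
  proof -
    have "S c \<le> (SUP a\<in>A. LINT w|P. ramp c d (Xa a w))"
      unfolding S_def by (rule cSUP_mono[OF A_ne bddR[OF that]]) (use m_le_ramp that in blast)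
    also have "\<dots> = sub_exp Ps (\<lambda>w. ramp c d (X w))" using repR[OF that] by simp
    also have "\<dots> \<le> U d" unfolding U_def upper_cdf_def
      by (rule sub_mono[OF Ps_ne rampQ(1)[OF _ that] indQ _ bdd_indQ]) (auto simp: indicator_def ramp_bounds that)
    finally show ?thesis .
  qed
  have US: "U c \<le> S d" if "c < d" for c d
  proof -
    have "U c \<le> sub_exp Ps (\<lambda>w. ramp c d (X w))" unfolding U_def upper_cdf_def
      by (rule sub_mono[OF Ps_ne indQ rampQ(1)[OF _ that]])
        (auto simp: indicator_def ramp_bounds that intro!: bdd_aboveI2[where M=1] int_le_const[OF Ps_prob rampQ(1)])
    also have "\<dots> = (SUP a\<in>A. LINT w|P. ramp c d (Xa a w))" using repR[OF that] by simp
    also have "\<dots> \<le> S d"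
      unfolding S_def by (rule cSUP_mono[OF A_ne bddS]) (use ramp_le_m that in blast)
    finally show ?thesis .
  qed
  have IL: "I c \<le> L d" if "c < d" for c d
  proof -
    have "(SUP a\<in>A. LINT w|P. - ramp c d (Xa a w)) \<le> - I c"
    proof (rule cSUP_least[OF A_ne])
      fix a assume a: "a \<in> A"
      have "I c \<le> m a c" unfolding I_def by (rule cINF_lower[OF bddI a])
      then show "(LINT w|P. - ramp c d (Xa a w)) \<le> - I c" using m_le_ramp[OF a that] by simp
    qed
    moreover have "sub_exp Ps (\<lambda>w. - indicator {w. X w \<le> d} w) \<le> sub_exp Ps (\<lambda>w. - ramp c d (X w))"
      by (rule sub_mono[OF Ps_ne nindQ rampQ(2)[OF _ that] _ bdd_nrampQ[OF that]])
        (auto simp: indicator_def ramp_bounds that)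
    ultimately show ?thesis unfolding L_def lower_cdf_def using repN[OF that] by simp
  qed
  have LI: "L c \<le> I d" if "c < d" for c d
  proof -
    have "- (SUP a\<in>A. LINT w|P. - ramp c d (Xa a w)) \<le> I d"
      unfolding I_def
    proof (rule cINF_greatest[OF A_ne])
      fix a assume a: "a \<in> A"
      have "(LINT w|P. - ramp c d (Xa a w)) \<le> (SUP a\<in>A. LINT w|P. - ramp c d (Xa a w))"
        by (rule cSUP_upper[OF a bddN[OF that]])
      then show "- (SUP a\<in>A. LINT w|P. - ramp c d (Xa a w)) \<le> m a d" using ramp_le_m[OF a that] by simp
    qed
    moreover have "sub_exp Ps (\<lambda>w. - ramp c d (X w)) \<le> sub_exp Ps (\<lambda>w. - indicator {w. X w \<le> c} w)"
      by (rule sub_mono[OF Ps_ne rampQ(2)[OF _ that] nindQ _ bdd_nindQ])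
        (auto simp: indicator_def ramp_bounds that)
    ultimately show ?thesis unfolding L_def lower_cdf_def using repN[OF that] by simp
  qed
  have right: "a \<le> f y" if "isCont f y" "\<And>x. y < x \<Longrightarrow> a \<le> f x" for f :: "real \<Rightarrow> real" and a y
  proof (rule tendsto_lowerbound)
    show "(f \<longlongrightarrow> f y) (at_right y)" using that(1) by (simp add: isCont_def filterlim_at_split)
    show "\<forall>\<^sub>F x in at_right y. a \<le> f x"
      using eventually_at_right_less[of y] by eventually_elim (use that in auto)
  qed simp
  have left: "f y \<le> a" if "isCont f y" "\<And>x. x < y \<Longrightarrow> f x \<le> a" for f :: "real \<Rightarrow> real" and a y
  proof (rule tendsto_upperbound)
    show "(f \<longlongrightarrow> f y) (at_left y)" using that(1) by (simp add: isCont_def filterlim_at_split)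
    show "\<forall>\<^sub>F x in at_left y. f x \<le> a"
      unfolding eventually_at_left_field using that by (intro exI[of _ "y - 1"]) auto
  qed simp
  have "U y = S y" if "isCont U y" for y
    using left[OF that, of "S y"] right[OF that, of "S y"] SU US by (meson order_antisym)
  moreover have "L y = I y" if "isCont L y" for y
    using left[OF that, of "I y"] right[OF that, of "I y"] IL LI by (meson order_antisym)
  ultimately show ?thesis unfolding U_def L_def S_def I_def m_def by blast
qed

end
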